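(* Let $(x_n)$ be generated by (HPPA). Let ${\rm a},{\rm b},{\rm B},{\rm E}:\mathbb{N}\to\mathbb{N}$ be monotone functions satisfying (Q1), (Q3'), (Q3), (Q4) respectively. Let $\mathcal{E},\mathcal{D}\in\mathbb{N}$ satisfy $\mathcal{E}\geq 1+\sum_{i=0}^{{\rm E}(0)}\|e_i\|$ and $\mathcal{D}\geq\|x_0-p\|$ for some $p\in S$, and set $N:=\max\{2\mathcal{D},\mathcal{D}+\mathcal{E}\}$. Then for every $k\in\mathbb{N}$ and every monotone $f:\mathbb{N}\to\mathbb{N}$ there exist $n\leq\Psi(k,f)$ and $x\in B_N$ such that $$\forall i\in[n,f(n)]\ \left(\|J_{\beta_i}(x)-x\|\leq\frac{1}{f(n)+1}\ \wedge\ \langle x_0-x,\,x_i-x\rangle\leq\frac{1}{k+1}\right),$$ where $\Psi(k,f):=\chi_1\big(24N(w_{\hat\nu,N}^{(R)}(0)+1)^2\big)$ with: $R:=4N^4(k+1)^2$; $\nu_f(m):=\delta_{\rm b}(f(m),f(m))$ where $\delta_{\rm b}(k',n'):=\max\{2,{\rm b}(n')\}(k'+1)-1$; $\hat\nu(m):=\nu_f(\chi_1(m))$; $w_{g,N}(m):=\max\{g(24N(m+1)^2),24N(m+1)^2\}$; $\xi(k'):=\max\{{\rm a}(2(2\mathcal{D}+\mathcal{E})(k'+1)-1),{\rm E}(2k'+1)+1\}$; and $\chi_1(k'):=\max\{\xi(4k'+3),{\rm B}(8(\mathcal{D}+\mathcal{E})(k'+1)-1)\}+1$.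
   Context: $X$ is a real Hilbert space, $\mathsf{A}:X\to 2^X$ a maximal monotone operator with zero set $S=\{x:0\in\mathsf{A}(x)\}$, assumed nonempty. For $\beta>0$, $J_\beta:=(Id+\beta\mathsf{A})^{-1}$ is the resolvent, a single-valued nonexpansive map with fixed point set $S$. Given $(\alpha_n)\subset\,]0,1[$, $(\beta_n)\subset(0,\infty)$, $(e_n)\subset X$, $x_0\in X$, (HPPA) is the sequence $x_{n+1}:=\alpha_n x_0+(1-\alpha_n)(J_{\beta_n}(x_n)+e_n)$. (Q1): $\forall k\,\forall n\geq{\rm a}(k)\ \alpha_n\leq\frac{1}{k+1}$. (Q3'): $\forall n\ \beta_n\leq{\rm b}(n)$. (Q3): $\forall k\,\forall n\geq{\rm B}(k)\ \beta_n\geq k$. (Q4): $\forall k\,\forall n\ \sum_{i={\rm E}(k)+1}^{{\rm E}(k)+n}\|e_i\|\leq\frac{1}{k+1}$. $B_N:=\{x\in X:\|x-p\|\leq N\}$ with $p$ the point in $S$ from the hypothesis. Monotone means nondecreasing. $g^{(R)}$ is the $R$-fold composition of $g$ ($g^{(0)}$ the identity). $[a,b]$ is the set of naturals $m$ with $a\le m\le b$. *)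

theory Defs
  imports "HOL-Analysis.Analysis"
begin

definition monotone_operator :: "('a::real_inner \<Rightarrow> 'a set) \<Rightarrow> bool" where
  "monotone_operator A \<longleftrightarrow>
     (\<forall>x y u v. u \<in> A x \<longrightarrow> v \<in> A y \<longrightarrow> 0 \<le> inner (x - y) (u - v))"

definition maximal_monotone :: "('a::real_inner \<Rightarrow> 'a set) \<Rightarrow> bool" where
  "maximal_monotone A \<longleftrightarrow> monotone_operator A \<and>
     (\<forall>B. monotone_operator B \<and> (\<forall>x. A x \<subseteq> B x) \<longrightarrow> B = A)"

definition zeros :: "('a::real_inner \<Rightarrow> 'a set) \<Rightarrow> 'a set" where
  "zeros A = {x. 0 \<in> A x}"

definition resolvent :: "('a::real_inner \<Rightarrow> 'a set) \<Rightarrow> real \<Rightarrow> 'a \<Rightarrow> 'a" where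
  "resolvent A \<beta> x = (THE y. \<exists>u \<in> A y. x = y + \<beta> *\<^sub>R u)"

definition N_bound :: "nat \<Rightarrow> nat \<Rightarrow> nat" where
  "N_bound DD EE = max (2 * DD) (DD + EE)"

definition delta_b :: "(nat \<Rightarrow> nat) \<Rightarrow> nat \<Rightarrow> nat \<Rightarrow> nat" where
  "delta_b b k' n' = max 2 (b n') * (k' + 1) - 1"

definition nu_f :: "(nat \<Rightarrow> nat) \<Rightarrow> (nat \<Rightarrow> nat) \<Rightarrow> nat \<Rightarrow> nat" where
  "nu_f b f m = delta_b b (f m) (f m)"

definition w_fun :: "(nat \<Rightarrow> nat) \<Rightarrow> nat \<Rightarrow> nat \<Rightarrow> nat" where
  "w_fun g N m = max (g (24 * N * (m + 1)^2)) (24 * N * (m + 1)^2)"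

definition xi_fun :: "(nat \<Rightarrow> nat) \<Rightarrow> (nat \<Rightarrow> nat) \<Rightarrow> nat \<Rightarrow> nat \<Rightarrow> nat \<Rightarrow> nat" where
  "xi_fun a E DD EE k' = max (a (2 * (2 * DD + EE) * (k' + 1) - 1)) (E (2 * k' + 1) + 1)"

definition chi1 :: "(nat \<Rightarrow> nat) \<Rightarrow> (nat \<Rightarrow> nat) \<Rightarrow> (nat \<Rightarrow> nat) \<Rightarrow> nat \<Rightarrow> nat \<Rightarrow> nat \<Rightarrow> nat" where
  "chi1 a B E DD EE k' = max (xi_fun a E DD EE (4 * k' + 3)) (B (8 * (DD + EE) * (k' + 1) - 1)) + 1"

definition nu_hat :: "(nat \<Rightarrow> nat) \<Rightarrow> (nat \<Rightarrow> nat) \<Rightarrow> (nat \<Rightarrow> nat) \<Rightarrow> (nat \<Rightarrow> nat)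
    \<Rightarrow> nat \<Rightarrow> nat \<Rightarrow> (nat \<Rightarrow> nat) \<Rightarrow> nat \<Rightarrow> nat" where
  "nu_hat a b B E DD EE f m = nu_f b f (chi1 a B E DD EE m)"

definition Psi :: "(nat \<Rightarrow> nat) \<Rightarrow> (nat \<Rightarrow> nat) \<Rightarrow> (nat \<Rightarrow> nat) \<Rightarrow> (nat \<Rightarrow> nat)
    \<Rightarrow> nat \<Rightarrow> nat \<Rightarrow> nat \<Rightarrow> (nat \<Rightarrow> nat) \<Rightarrow> nat" where
  "Psi a b B E DD EE k f =
     (let N = N_bound DD EE;
          R = 4 * N^4 * (k + 1)^2;
          w = w_fun (nu_hat a b B E DD EE f) N
      in chi1 a B E DD EE (24 * N * ((w ^^ R) 0 + 1)^2))"

end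

theory Submission
  imports Defs
begin


lemma sup_affine_conv:
  fixes c :: "'i \<Rightarrow> 'h::real_inner" and d :: "'i \<Rightarrow> real" and I :: "'i set"
  assumes I: "I \<noteq> {}"
    and a: "bdd_above ((\<lambda>i. inner a (c i) + d i) ` I)" and b: "bdd_above ((\<lambda>i. inner b (c i) + d i) ` I)"
    and t: "0 \<le> t" "t \<le> 1"
  shows "bdd_above ((\<lambda>i. inner ((1-t) *\<^sub>R a + t *\<^sub>R b) (c i) + d i) ` I) \<and>
     (SUP i\<in>I. inner ((1-t) *\<^sub>R a + t *\<^sub>R b) (c i) + d i) \<le>
       (1-t) * (SUP i\<in>I. inner a (c i) + d i) + t * (SUP i\<in>I. inner b (c i) + d i)"
proof -
  have *: "inner ((1-t) *\<^sub>R a + t *\<^sub>R b) (c i) + d i \<le> (1-t) * (SUP i\<in>I. inner a (c i) + d i) + t * (SUP i\<in>I. inner b (c i) + d i)" if "i \<in> I" for i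
  proof -
    have "inner ((1-t) *\<^sub>R a + t *\<^sub>R b) (c i) + d i
        = (1-t) * (inner a (c i) + d i) + t * (inner b (c i) + d i)"
      by (simp add: inner_add_left algebra_simps)
    also have "\<dots> \<le> (1-t) * (SUP i\<in>I. inner a (c i) + d i) + t * (SUP i\<in>I. inner b (c i) + d i)"
      using a b that t by (intro add_mono mult_left_mono cSUP_upper) auto
    finally show ?thesis .
  qed
  show ?thesis using * I by (auto intro!: bdd_aboveI2 cSUP_least)
qed

lemma strongly_convex_min:
  fixes c :: "'i \<Rightarrow> 'h::{real_inner,complete_space}" and d :: "'i \<Rightarrow> real" and I :: "'i set"
  defines "D \<equiv> {a. bdd_above ((\<lambda>i. inner a (c i) + d i) ` I)}"
  defines "F \<equiv> (\<lambda>a. SUP i\<in>I. inner a (c i) + d i)"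
  assumes I: "I \<noteq> {}" and D: "D \<noteq> {}"
  shows "\<exists>a0\<in>D. \<forall>a\<in>D. F a0 + (norm a0)^2/2 \<le> F a + (norm a)^2/2"
proof -
  define \<Phi> where "\<Phi> a = F a + (norm a)^2/2" for a
  obtain i0 where i0: "i0 \<in> I" using I by auto
  have le_F: "inner a (c i) + d i \<le> F a" if "a \<in> D" "i \<in> I" for a i
    unfolding F_def using that unfolding D_def by (auto intro: cSUP_upper)
  have F_le: "F a \<le> B" if "\<And>i. i \<in> I \<Longrightarrow> inner a (c i) + d i \<le> B" for a B
    unfolding F_def using that I by (auto intro: cSUP_least)
  have conv: "(1-t) *\<^sub>R a + t *\<^sub>R b \<in> D \<and> F ((1-t) *\<^sub>R a + t *\<^sub>R b) \<le> (1-t) * F a + t * F b"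
    if "a \<in> D" "b \<in> D" "0 \<le> t" "t \<le> 1" for a b t
  proof -
    have *: "inner ((1-t) *\<^sub>R a + t *\<^sub>R b) (c i) + d i \<le> (1-t) * F a + t * F b" if "i \<in> I" for i
    proof -
      have "inner ((1-t) *\<^sub>R a + t *\<^sub>R b) (c i) + d i
          = (1-t) * (inner a (c i) + d i) + t * (inner b (c i) + d i)"
        by (simp add: inner_add_left algebra_simps)
      also have "\<dots> \<le> (1-t) * F a + t * F b"
        using le_F[OF \<open>a\<in>D\<close> that] le_F[OF \<open>b\<in>D\<close> that] \<open>0\<le>t\<close> \<open>t\<le>1\<close>
        by (intro add_mono mult_left_mono) auto
      finally show ?thesis .
    qed
    show ?thesis using * F_le unfolding D_def by (auto intro!: bdd_aboveI2)
  qed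
  have lb: "d i0 - (norm (c i0))^2/2 \<le> \<Phi> a" if "a \<in> D" for a
  proof -
    have "inner a (c i0) \<ge> - (norm a * norm (c i0))"
      using Cauchy_Schwarz_ineq2[of a "c i0"] by (simp add: abs_le_iff) 
    moreover have "0 \<le> (norm a - norm (c i0))^2" by simp
    moreover have "(norm a - norm (c i0))^2 = (norm a)^2 - 2*(norm a * norm (c i0)) + (norm (c i0))^2"
      by (simp add: power2_diff)
    ultimately show ?thesis using le_F[OF that i0] unfolding \<Phi>_def by linarith
  qed
  define m where "m = Inf (\<Phi> ` D)"
  have bddb: "bdd_below (\<Phi> ` D)" using lb by (auto intro!: bdd_belowI2)
  have m_le: "m \<le> \<Phi> a" if "a \<in> D" for a
    unfolding m_def using bddb that by (auto intro: cInf_lower)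
  have "\<exists>a\<in>D. \<Phi> a < m + 1/(real n+1)" for n
  proof -
    have "Inf (\<Phi> ` D) < m + 1/(real n+1)" unfolding m_def by simp
    then show ?thesis using cInf_lessD[of "\<Phi> ` D"] D by auto
  qed
  then obtain s where s: "\<And>n. s n \<in> D" "\<And>n. \<Phi> (s n) < m + 1/(real n+1)" by metis
  have dist_sq: "(norm (a - b))^2 \<le> 4 * (\<Phi> a + \<Phi> b) - 8 * m" if "a \<in> D" "b \<in> D" for a b
  proof -
    define M where "M = (1/2) *\<^sub>R a + (1/2) *\<^sub>R b"
    have mid: "M \<in> D \<and> F M \<le> F a/2 + F b/2"
      using conv[OF that, of "1/2"] unfolding M_def by simp
    have eq: "(norm M)^2 = (norm a)^2/2 + (norm b)^2/2 - (norm (a-b))^2/4"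
      unfolding M_def
      by (simp add: power2_norm_eq_inner inner_add_left inner_add_right inner_diff_left inner_diff_right inner_commute field_simps)
    have h1: "m \<le> F M + (norm M)^2/2" using m_le mid unfolding \<Phi>_def by blast
    have "(norm (a-b))^2 \<le> 4*F a + 2*(norm a)^2 + 4*F b + 2*(norm b)^2 - 8*m"
      using h1 mid[THEN conjunct2] eq by linarith
    then show ?thesis unfolding \<Phi>_def by (simp add: algebra_simps)
  qed
  have "Cauchy s"
  proof (rule metric_CauchyI)
    fix e :: real assume e: "e > 0"
    obtain M :: nat where M: "8 / e^2 < real M" using reals_Archimedean2 by blast
    show "\<exists>M. \<forall>i\<ge>M. \<forall>j\<ge>M. dist (s i) (s j) < e"
    proof (intro exI allI impI)
      fix i j assume ij: "M \<le> i" "M \<le> j"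
      have "(dist (s i) (s j))^2 \<le> 4 * (\<Phi> (s i) + \<Phi> (s j)) - 8 * m"
        using dist_sq[OF s(1) s(1)] by (simp add: dist_norm)
      also have "\<dots> < 4 * (1/(real i+1) + 1/(real j+1))" using s(2)[of i] s(2)[of j] unfolding distrib_left by linarith
      also have "\<dots> \<le> 4 * (1/(real M+1) + 1/(real M+1))"
        using ij by (intro mult_left_mono add_mono divide_left_mono) auto
      also have "\<dots> < e^2"
      proof -
        have "8 < e^2 * (real M + 1)" using M e by (simp add: field_simps) (smt (verit) zero_le_power2)
        then show ?thesis by (simp add: field_simps)
      qed
      finally have "(dist (s i) (s j))^2 < e^2" .
      then show "dist (s i) (s j) < e" using e by (simp add: power_less_imp_less_base)
    qed
  qed
  then obtain a0 where a0: "s \<longlonglongrightarrow> a0" using Cauchy_convergent_iff convergent_def by blast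
  have key: "inner a0 (c i) + d i + (norm a0)^2/2 \<le> m" if "i \<in> I" for i
  proof (rule LIMSEQ_le)
    show "(\<lambda>n. inner (s n) (c i) + d i + (norm (s n))^2/2) \<longlonglongrightarrow> inner a0 (c i) + d i + (norm a0)^2/2"
      by (intro tendsto_intros a0) simp
    show "(\<lambda>n. m + 1/(real n+1)) \<longlonglongrightarrow> m"
      using LIMSEQ_inverse_real_of_nat_add[of m] by (simp add: inverse_eq_divide add.commute)
    show "\<exists>N. \<forall>n\<ge>N. inner (s n) (c i) + d i + (norm (s n))^2/2 \<le> m + 1/(real n+1)"
    proof (intro exI allI impI)
      fix n :: nat
      show "inner (s n) (c i) + d i + (norm (s n))^2/2 \<le> m + 1/(real n+1)"
        using le_F[OF s(1) that, of n] s(2)[of n] unfolding \<Phi>_def by linarith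
    qed
  qed
  have key2: "inner a0 (c i) + d i \<le> m" if "i \<in> I" for i
    using key[OF that] by (smt (verit) zero_le_power2 divide_nonneg_pos)
  have a0D: "a0 \<in> D" unfolding D_def using key2 by (auto intro!: bdd_aboveI2[where M="m"])
  have "F a0 \<le> m - (norm a0)^2/2" using key by (intro F_le) (smt (verit))
  then have "\<Phi> a0 \<le> m" unfolding \<Phi>_def by simp
  then show ?thesis using a0D m_le unfolding \<Phi>_def by force
qed




lemma minty_core:
  fixes G :: "('a::{real_inner,complete_space} \<times> 'a) set"
  assumes mono: "\<And>y v y' v'. (y,v) \<in> G \<Longrightarrow> (y',v') \<in> G \<Longrightarrow> 0 \<le> inner (y - y') (v - v')"
    and ne: "G \<noteq> {}"
  shows "\<exists>c. \<forall>y v. (y,v) \<in> G \<longrightarrow> 0 \<le> inner (y - c) (v + c)"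
proof -
  define cc :: "'a \<times> 'a \<Rightarrow> 'a \<times> 'a" where "cc b = (snd b, fst b)" for b
  define dd :: "'a \<times> 'a \<Rightarrow> real" where "dd b = - inner (fst b) (snd b)" for b
  define D where "D = {a. bdd_above ((\<lambda>i. inner a (cc i) + dd i) ` G)}"
  define F where "F = (\<lambda>a. SUP i\<in>G. inner a (cc i) + dd i)"
  have Lb: "inner b (cc i) + dd i \<le> inner (fst b) (snd b)" if "b \<in> G" "i \<in> G" for b i
  proof -
    obtain y v where b: "b = (y,v)" by (cases b)
    obtain y' v' where i: "i = (y',v')" by (cases i)
    have "0 \<le> inner (y - y') (v - v')" using mono that b i by auto
    then show ?thesis unfolding b i cc_def dd_def
      by (simp add: inner_diff_left inner_diff_right inner_commute)
  qed
  have GD: "G \<subseteq> D" unfolding D_def using Lb by (auto intro!: bdd_aboveI2)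
  have FG: "F b \<le> inner (fst b) (snd b)" if "b \<in> G" for b
    unfolding F_def by (rule cSUP_least[OF ne]) (rule Lb[OF that])
  have DNE: "D \<noteq> {}" using GD ne by blast
  have "\<exists>a0\<in>D. \<forall>a\<in>D. F a0 + (norm a0)^2/2 \<le> F a + (norm a)^2/2"
    unfolding D_def F_def by (rule strongly_convex_min[OF ne DNE[unfolded D_def]])
  then obtain a0 where a0D: "a0 \<in> D" and amin: "\<And>a. a \<in> D \<Longrightarrow> F a0 + (norm a0)^2/2 \<le> F a + (norm a)^2/2"
    by blast
  obtain x u where a0: "a0 = (x,u)" by (cases a0)
  show ?thesis
  proof (intro exI allI impI)
    fix y v assume yv: "(y,v) \<in> G"
    define b where "b = (y,v)"
    have bD: "b \<in> D" using yv GD b_def by auto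
    define C where "C = inner y v - F a0 + inner a0 (b - a0)"
    define K where "K = (norm (b - a0))^2"
    have ineq: "0 \<le> C + t/2 * K" if t: "0 < t" "t \<le> 1" for t
    proof -
      have cv: "(1-t) *\<^sub>R a0 + t *\<^sub>R b \<in> D \<and> F ((1-t) *\<^sub>R a0 + t *\<^sub>R b) \<le> (1-t) * F a0 + t * F b"
        using sup_affine_conv[of G a0 cc dd b t] a0D bD ne t unfolding D_def F_def by auto
      have eqa: "(1-t) *\<^sub>R a0 + t *\<^sub>R b = a0 + t *\<^sub>R (b - a0)" by (simp add: algebra_simps)
      have nrm: "(norm (a0 + t *\<^sub>R (b - a0)))^2 = (norm a0)^2 + 2*t*inner a0 (b - a0) + t^2 * K"
        unfolding K_def power2_norm_eq_inner by (simp add: inner_add_left inner_add_right inner_commute algebra_simps power2_eq_square)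
      have "F a0 + (norm a0)^2/2 \<le> F ((1-t) *\<^sub>R a0 + t *\<^sub>R b) + (norm ((1-t) *\<^sub>R a0 + t *\<^sub>R b))^2/2"
        using amin cv by blast
      also have "\<dots> \<le> (1-t) * F a0 + t * inner y v + ((norm a0)^2 + 2*t*inner a0 (b - a0) + t^2 * K)/2"
      proof -
        have n2: "(norm ((1-t) *\<^sub>R a0 + t *\<^sub>R b))^2 = (norm a0)^2 + 2*t*inner a0 (b - a0) + t^2 * K"
          by (simp only: eqa nrm)
        have fb: "t * F b \<le> t * inner y v" using FG[OF yv] t unfolding b_def by (intro mult_left_mono) auto
        have "F ((1-t) *\<^sub>R a0 + t *\<^sub>R b) \<le> (1-t) * F a0 + t * inner y v"
          using fb cv[THEN conjunct2] by linarith
        then show ?thesis unfolding n2 by (rule add_right_mono)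
      qed
      finally have h: "F a0 + (norm a0)^2/2 \<le> (1-t) * F a0 + t * inner y v + ((norm a0)^2 + 2*t*inner a0 (b - a0) + t^2 * K)/2" .
      have e1: "((norm a0)^2 + 2*t*inner a0 (b - a0) + t^2 * K)/2 = (norm a0)^2/2 + t*inner a0 (b - a0) + t^2*K/2"
        by (simp add: field_simps)
      have e2: "(1-t) * F a0 = F a0 - t * F a0" by (simp add: algebra_simps)
      have e3: "t * (C + t/2 * K) = t * inner y v - t * F a0 + t * inner a0 (b - a0) + t^2*K/2"
        unfolding C_def by (simp add: algebra_simps power2_eq_square)
      have "0 \<le> t * (C + t/2 * K)" using h e1 e2 e3 by linarith
      then show ?thesis using t by (simp add: zero_le_mult_iff)
    qed
    have C0: "0 \<le> C"
    proof (rule ccontr)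
      assume "\<not> 0 \<le> C"
      then have Cn: "C < 0" by simp
      have K0: "0 \<le> K" unfolding K_def by simp
      define t where "t = min 1 (- C / (K + 1))"
      have t0: "0 < t" "t \<le> 1" unfolding t_def using Cn K0 by (auto simp: divide_neg_pos)
      have "t * K \<le> (- C / (K+1)) * K" unfolding t_def using K0 by (intro mult_right_mono) auto
      also have "\<dots> \<le> - C" using Cn K0 by (simp add: field_simps)
      finally have "t/2 * K < - C" using Cn by simp
      then show False using ineq[OF t0] by simp
    qed
    have La: "inner a0 (cc b) + dd b \<le> F a0"
      unfolding F_def using a0D yv unfolding D_def b_def by (auto intro: cSUP_upper)
    define c where "c = (1/2) *\<^sub>R (x - u)"
    have iden: "2 * inner (y - c) (v + c) = (C + (F a0 - (inner a0 (cc b) + dd b))) + (norm (x + u))^2/2"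
      unfolding C_def c_def a0 b_def cc_def dd_def
      by (simp add: power2_norm_eq_inner inner_add_left inner_add_right inner_diff_left inner_diff_right inner_commute algebra_simps)
    have "0 \<le> 2 * inner (y - c) (v + c)" unfolding iden using C0 La by simp
    then show "0 \<le> inner (y - (1/2) *\<^sub>R (x - u)) (v + (1/2) *\<^sub>R (x - u))" unfolding c_def by simp
  qed
qed

lemma max_mono_ext:
  assumes "maximal_monotone A" and rel: "\<And>y v. v \<in> A y \<Longrightarrow> 0 \<le> inner (x - y) (u - v)"
  shows "u \<in> A x"
proof -
  define B where "B = A(x := insert u (A x))"
  have monA: "monotone_operator A" using assms(1) unfolding maximal_monotone_def by simp
  have "monotone_operator B" unfolding monotone_operator_def
  proof (intro allI impI)
    fix x1 y1 u1 v1 assume h: "u1 \<in> B x1" "v1 \<in> B y1"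
    show "0 \<le> inner (x1 - y1) (u1 - v1)"
    proof (cases "x1 = x \<and> u1 = u")
      case True
      show ?thesis
      proof (cases "y1 = x \<and> v1 = u")
        case True
        then show ?thesis using \<open>x1 = x \<and> u1 = u\<close> by simp
      next
        case False
        then have "v1 \<in> A y1" using h(2) unfolding B_def by (auto split: if_splits)
        then show ?thesis using rel True by auto
      qed
    next
      case False
      then have u1: "u1 \<in> A x1" using h(1) unfolding B_def by (auto split: if_splits)
      show ?thesis
      proof (cases "y1 = x \<and> v1 = u")
        case True
        have "0 \<le> inner (x - x1) (u - u1)" using rel u1 by blast
        moreover have "inner (x1 - y1) (u1 - v1) = inner (x - x1) (u - u1)" using True
          by (metis inner_minus_left inner_minus_right minus_diff_eq minus_minus)
        ultimately show ?thesis by simp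
      next
        case False
        then have "v1 \<in> A y1" using h(2) unfolding B_def by (auto split: if_splits)
        then show ?thesis using monA u1 unfolding monotone_operator_def by blast
      qed
    qed
  qed
  moreover have "\<forall>z. A z \<subseteq> B z" unfolding B_def by auto
  ultimately have "B = A" using assms(1) unfolding maximal_monotone_def by blast
  then show ?thesis unfolding B_def by (metis fun_upd_same insertI1)
qed




lemma sq_le_mul: fixes n r :: real shows "0 \<le> n \<Longrightarrow> 0 \<le> r \<Longrightarrow> n^2 \<le> n*r \<Longrightarrow> n \<le> r"
  by (cases "n = 0") (auto simp: power2_eq_square)

locale mm =
  fixes A :: "'a::{real_inner,complete_space} \<Rightarrow> 'a set"
  assumes maxmon: "maximal_monotone A" and nz: "zeros A \<noteq> {}"
begin

lemma monA: "u \<in> A x \<Longrightarrow> v \<in> A y \<Longrightarrow> 0 \<le> inner (x - y) (u - v)"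
  using maxmon unfolding maximal_monotone_def monotone_operator_def by blast

lemma res_eq:
  assumes b: "\<beta> > 0" and u: "u \<in> A y"
  shows "resolvent A \<beta> (y + \<beta> *\<^sub>R u) = y"
  unfolding resolvent_def
proof (rule the_equality)
  show "\<exists>u'\<in>A y. y + \<beta> *\<^sub>R u = y + \<beta> *\<^sub>R u'" using u by blast
next
  fix y' assume "\<exists>u'\<in>A y'. y + \<beta> *\<^sub>R u = y' + \<beta> *\<^sub>R u'"
  then obtain u' where u': "u' \<in> A y'" and eq: "y + \<beta> *\<^sub>R u = y' + \<beta> *\<^sub>R u'" by blast
  have d: "y' - y = \<beta> *\<^sub>R (u - u')" using eq by (simp add: algebra_simps)
  have "0 \<le> inner (y' - y) (u' - u)" using monA[OF u' u] .
  also have "inner (y' - y) (u' - u) = - \<beta> * (norm (u - u'))^2"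
    unfolding d power2_norm_eq_inner by (simp add: inner_diff_right inner_diff_left inner_commute algebra_simps)
  finally have "(norm (u - u'))^2 \<le> 0" using b by (simp add: mult_le_0_iff)
  then have "u = u'" by simp
  then show "y' = y" using d by simp
qed

lemma res_in:
  assumes b: "\<beta> > 0"
  shows "(1/\<beta>) *\<^sub>R (z - resolvent A \<beta> z) \<in> A (resolvent A \<beta> z)"
proof -
  define G where "G = {(y, \<beta> *\<^sub>R v - z) | y v. v \<in> A y}"
  have "\<exists>c. \<forall>y v. (y,v) \<in> G \<longrightarrow> 0 \<le> inner (y - c) (v + c)"
  proof (rule minty_core)
    fix y v y' v' assume "(y,v) \<in> G" "(y',v') \<in> G"
    then obtain w w' where w: "w \<in> A y" "v = \<beta> *\<^sub>R w - z" and w': "w' \<in> A y'" "v' = \<beta> *\<^sub>R w' - z"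
      unfolding G_def by blast
    have "inner (y - y') (v - v') = \<beta> * inner (y - y') (w - w')"
      unfolding w w' by (simp add: algebra_simps inner_diff_right)
    then show "0 \<le> inner (y - y') (v - v')" using monA[OF w(1) w'(1)] b by simp
  next
    obtain p where "p \<in> zeros A" using nz by blast
    then have "(p, \<beta> *\<^sub>R 0 - z) \<in> G" unfolding G_def zeros_def by blast
    then show "G \<noteq> {}" by blast
  qed
  then obtain c where c: "\<And>y v. (y,v) \<in> G \<Longrightarrow> 0 \<le> inner (y - c) (v + c)" by blast
  have cin: "(1/\<beta>) *\<^sub>R (z - c) \<in> A c"
  proof (rule max_mono_ext[OF maxmon])
    fix y v assume v: "v \<in> A y"
    have "(y, \<beta> *\<^sub>R v - z) \<in> G" unfolding G_def using v by blast
    then have h: "0 \<le> inner (y - c) (\<beta> *\<^sub>R v - z + c)" using c by blast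
    have "inner (c - y) ((1/\<beta>) *\<^sub>R (z - c) - v) = (1/\<beta>) * inner (y - c) (\<beta> *\<^sub>R v - z + c)"
      using b by (simp add: inner_diff_right inner_diff_left inner_add_right inner_commute algebra_simps)
    then show "0 \<le> inner (c - y) ((1/\<beta>) *\<^sub>R (z - c) - v)" using h b by simp
  qed
  have zc: "z = c + \<beta> *\<^sub>R ((1/\<beta>) *\<^sub>R (z - c))" using b by simp
  have "resolvent A \<beta> z = c" by (subst zc, rule res_eq[OF b cin])
  then show ?thesis using cin by simp
qed

lemma firm:
  assumes b: "\<beta> > 0"
  shows "(norm (resolvent A \<beta> x - resolvent A \<beta> y))^2 \<le> inner (x - y) (resolvent A \<beta> x - resolvent A \<beta> y)"
proof -
  let ?J = "resolvent A \<beta>"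
  have "0 \<le> inner (?J x - ?J y) ((1/\<beta>) *\<^sub>R (x - ?J x) - (1/\<beta>) *\<^sub>R (y - ?J y))"
    using monA[OF res_in[OF b] res_in[OF b]] .
  also have "\<dots> = (1/\<beta>) * (inner (x - y) (?J x - ?J y) - (norm (?J x - ?J y))^2)"
    unfolding power2_norm_eq_inner by (simp add: inner_diff_right inner_diff_left inner_commute algebra_simps)
  finally show ?thesis using b by (simp add: zero_le_divide_iff)
qed

lemma nonexp:
  assumes b: "\<beta> > 0"
  shows "norm (resolvent A \<beta> x - resolvent A \<beta> y) \<le> norm (x - y)"
proof -
  let ?n = "norm (resolvent A \<beta> x - resolvent A \<beta> y)"
  have "?n^2 \<le> norm (x - y) * ?n"
    using firm[OF b, of x y] Cauchy_Schwarz_ineq2[of "x - y" "resolvent A \<beta> x - resolvent A \<beta> y"] by linarith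
  then show ?thesis by (cases "?n = 0") (auto simp: power2_eq_square)
qed

lemma res_fix: "\<beta> > 0 \<Longrightarrow> p \<in> zeros A \<Longrightarrow> resolvent A \<beta> p = p"
  using res_eq[of \<beta> 0 p] unfolding zeros_def by simp

lemma res_scale:
  assumes b: "\<beta> > 0"
  shows "norm (resolvent A \<beta> w - w) \<le> max 2 \<beta> * norm (resolvent A 1 w - w)"
proof (cases "\<beta> \<ge> 1")
  case True
  define z where "z = resolvent A \<beta> w"
  have u: "(1/\<beta>) *\<^sub>R (w - z) \<in> A z" unfolding z_def using res_in[OF b] .
  have "resolvent A 1 (z + 1 *\<^sub>R ((1/\<beta>) *\<^sub>R (w - z))) = z" by (rule res_eq[OF _ u]) simp
  then have "norm (z - resolvent A 1 w) \<le> norm ((z + 1 *\<^sub>R ((1/\<beta>) *\<^sub>R (w - z))) - w)"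
    using nonexp[of 1] by (metis zero_less_one)
  also have "(z + 1 *\<^sub>R ((1/\<beta>) *\<^sub>R (w - z))) - w = (1 - 1/\<beta>) *\<^sub>R (z - w)"
    by (simp add: algebra_simps)
  also have "norm \<dots> = (1 - 1/\<beta>) * norm (z - w)" using True by simp
  finally have h: "norm (z - resolvent A 1 w) \<le> (1 - 1/\<beta>) * norm (z - w)" .
  have "norm (z - w) \<le> norm (z - resolvent A 1 w) + norm (resolvent A 1 w - w)"
    using norm_triangle_ineq[of "z - resolvent A 1 w" "resolvent A 1 w - w"] by simp
  then have "(1/\<beta>) * norm (z - w) \<le> norm (resolvent A 1 w - w)" using h by (simp add: algebra_simps)
  then have "norm (z - w) \<le> \<beta> * norm (resolvent A 1 w - w)" using b by (simp add: field_simps)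
  also have "\<dots> \<le> max 2 \<beta> * norm (resolvent A 1 w - w)" by (intro mult_right_mono) auto
  finally show ?thesis unfolding z_def .
next
  case False
  define z where "z = resolvent A 1 w"
  have u: "(1/1) *\<^sub>R (w - z) \<in> A z" unfolding z_def using res_in[of 1] by simp
  have "resolvent A \<beta> (z + \<beta> *\<^sub>R ((1/1) *\<^sub>R (w - z))) = z" by (rule res_eq[OF b u])
  then have "norm (resolvent A \<beta> w - z) \<le> norm (w - (z + \<beta> *\<^sub>R ((1/1) *\<^sub>R (w - z))))"
    using nonexp[OF b] by metis
  also have "w - (z + \<beta> *\<^sub>R ((1/1) *\<^sub>R (w - z))) = (1 - \<beta>) *\<^sub>R (w - z)"
    by (simp add: algebra_simps)
  also have "norm \<dots> = (1 - \<beta>) * norm (w - z)" using False by simp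
  finally have h: "norm (resolvent A \<beta> w - z) \<le> (1 - \<beta>) * norm (w - z)" .
  have "norm (resolvent A \<beta> w - w) \<le> norm (resolvent A \<beta> w - z) + norm (z - w)"
    using norm_triangle_ineq[of "resolvent A \<beta> w - z" "z - w"] by simp
  also have "\<dots> \<le> (1 - \<beta>) * norm (w - z) + norm (z - w)" using h by simp
  also have "\<dots> \<le> 2 * norm (z - w)"
    using mult_right_mono[of "1-\<beta>" 1 "norm (w - z)"] b by (simp add: norm_minus_commute)
  also have "\<dots> \<le> max 2 \<beta> * norm (z - w)" by (intro mult_right_mono) auto
  finally show ?thesis unfolding z_def .
qed

lemma res_range:
  assumes b: "\<beta> > 0"
  shows "norm (resolvent A 1 (resolvent A \<beta> x) - resolvent A \<beta> x) \<le> norm (x - resolvent A \<beta> x) / \<beta>"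
proof -
  define u where "u = resolvent A \<beta> x"
  define w where "w = resolvent A 1 u"
  have v: "(1/\<beta>) *\<^sub>R (x - u) \<in> A u" unfolding u_def using res_in[OF b] .
  have g: "(1/1) *\<^sub>R (u - w) \<in> A w" unfolding w_def using res_in[of 1] by simp
  have "0 \<le> inner (w - u) ((1/1) *\<^sub>R (u - w) - (1/\<beta>) *\<^sub>R (x - u))" using monA[OF g v] .
  also have "\<dots> = inner (u - w) ((1/\<beta>) *\<^sub>R (x - u)) - (norm (u - w))^2"
    unfolding power2_norm_eq_inner by (simp add: inner_diff_right inner_diff_left inner_commute algebra_simps)
  finally have "(norm (u - w))^2 \<le> inner (u - w) ((1/\<beta>) *\<^sub>R (x - u))" by simp
  also have "\<dots> \<le> norm (u - w) * norm ((1/\<beta>) *\<^sub>R (x - u))" by (rule norm_cauchy_schwarz)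
  finally have "norm (u - w) \<le> norm ((1/\<beta>) *\<^sub>R (x - u))"
    by (rule sq_le_mul[OF norm_ge_zero norm_ge_zero])
  also have "\<dots> = norm (x - u) / \<beta>" using b by simp
  finally show ?thesis unfolding w_def u_def by (simp add: norm_minus_commute)
qed

end



lemma convex_comb_sq:
  fixes q y w :: "'a::real_inner"
  shows "(norm (q - ((1-t) *\<^sub>R y + t *\<^sub>R w)))^2 = (1-t) * (norm (q - y))^2 + t * (norm (q - w))^2 - t*(1-t) * (norm (y - w))^2"
  unfolding power2_norm_eq_inner
  by (simp add: inner_diff_left inner_diff_right inner_add_left inner_add_right inner_commute algebra_simps)

lemma poly_bound:
  fixes t a b d \<delta> :: real
  assumes t: "0 \<le> t" "t \<le> 1" and a: "0 \<le> a" "a \<le> t*d + \<delta>" and b: "0 \<le> b" "b \<le> (1-t)*d + \<delta>"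
    and d: "0 \<le> d" and de: "0 \<le> \<delta>"
  shows "(1-t) * a^2 + t * b^2 - t*(1-t) * d^2 \<le> d * \<delta> + \<delta>^2"
proof -
  have "(1-t) * a^2 \<le> (1-t) * (t*d + \<delta>)^2" using t a by (intro mult_left_mono power_mono) auto
  moreover have "t * b^2 \<le> t * ((1-t)*d + \<delta>)^2" using t b by (intro mult_left_mono power_mono) auto
  moreover have "(1-t) * (t*d + \<delta>)^2 + t * ((1-t)*d + \<delta>)^2 - t*(1-t) * d^2 = 4*t*(1-t)*d*\<delta> + \<delta>^2"
    by (simp add: algebra_simps power2_eq_square)
  moreover have "4*t*(1-t)*d*\<delta> \<le> 1*d*\<delta>"
  proof -
    have "4*t*(1-t) \<le> 1" using zero_le_power2[of "2*t - 1"] by (simp add: algebra_simps power2_eq_square)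
    then show ?thesis using d de by (intro mult_right_mono) (auto intro: mult_nonneg_nonneg)
  qed
  ultimately show ?thesis by linarith
qed

lemma combo_bound:
  fixes T :: "'a::real_inner \<Rightarrow> 'a"
  assumes ne: "\<And>x y. norm (T x - T y) \<le> norm (x - y)"
    and t: "0 \<le> t" "t \<le> 1"
    and y: "norm (T y - y) \<le> \<delta>" and w: "norm (T w - w) \<le> \<delta>"
  shows "(norm (T ((1-t) *\<^sub>R y + t *\<^sub>R w) - ((1-t) *\<^sub>R y + t *\<^sub>R w)))^2 \<le> norm (y - w) * \<delta> + \<delta>^2"
proof -
  define z where "z = (1-t) *\<^sub>R y + t *\<^sub>R w"
  define d where "d = norm (y - w)"
  have zy: "z - y = t *\<^sub>R (w - y)" unfolding z_def by (simp add: algebra_simps)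
  have zw: "z - w = (1-t) *\<^sub>R (y - w)" unfolding z_def by (simp add: algebra_simps)
  have "norm (T z - y) \<le> norm (T z - T y) + norm (T y - y)"
    using norm_triangle_ineq[of "T z - T y" "T y - y"] by simp
  also have "\<dots> \<le> norm (z - y) + norm (T y - y)" using ne by simp
  also have "norm (z - y) = t * d" unfolding zy d_def using t by (simp add: norm_minus_commute)
  finally have a: "norm (T z - y) \<le> t*d + \<delta>" using y by simp
  have "norm (T z - w) \<le> norm (T z - T w) + norm (T w - w)"
    using norm_triangle_ineq[of "T z - T w" "T w - w"] by simp
  also have "\<dots> \<le> norm (z - w) + norm (T w - w)" using ne by simp
  also have "norm (z - w) = (1-t) * d" unfolding zw d_def using t by simp
  finally have b: "norm (T z - w) \<le> (1-t)*d + \<delta>" using w by simp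
  have de: "0 \<le> \<delta>" using y norm_ge_zero order_trans by blast
  have "(norm (T z - z))^2 = (1-t) * (norm (T z - y))^2 + t * (norm (T z - w))^2 - t*(1-t) * d^2"
    unfolding z_def d_def by (rule convex_comb_sq)
  also have "\<dots> \<le> d * \<delta> + \<delta>^2"
    by (rule poly_bound[OF t norm_ge_zero a norm_ge_zero b _ de]) (simp add: d_def)
  finally show ?thesis unfolding z_def d_def .
qed

lemma funpow_levels_mono:
  fixes W :: "nat \<Rightarrow> nat"
  assumes "\<And>m. m \<le> W m"
  shows "r \<le> s \<Longrightarrow> (W ^^ r) 0 \<le> (W ^^ s) 0"
proof (induction s)
  case 0 then show ?case by simp
next
  case (Suc s)
  show ?case
  proof (cases "r = Suc s")
    case True then show ?thesis by simp
  next
    case False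
    then have "(W ^^ r) 0 \<le> (W ^^ s) 0" using Suc by simp
    also have "\<dots> \<le> (W ^^ Suc s) 0" using assms by simp
    finally show ?thesis .
  qed
qed




lemma disj_by_neg1: "(\<not> P \<Longrightarrow> Q) \<Longrightarrow> P \<or> Q" by blast

context
  fixes T :: "'a::real_inner \<Rightarrow> 'a" and x0 p :: 'a and N DD k :: nat and g :: "nat \<Rightarrow> nat"
  assumes neT: "\<And>x y. norm (T x - T y) \<le> norm (x - y)" and Tp: "T p = p"
    and DD: "norm (x0 - p) \<le> real DD" and DDN: "DD \<le> N" and N1: "1 \<le> N"
begin

lemma proj_step:
  assumes y: "norm (y - p) \<le> real N" and ty: "norm (T y - y) \<le> 1/(real (w_fun g N m) + 1)"
  shows "(\<forall>w. norm (w - p) \<le> real N \<longrightarrow> norm (T w - w) \<le> 1/(real (24*N*(m+1)^2)) \<longrightarrow> inner (x0 - y) (w - y) \<le> 1/(real k + 1))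
   \<or> (\<exists>z. norm (z - p) \<le> real N \<and> (norm (x0 - z))^2 \<le> (norm (x0 - y))^2 - 1/(4 * (real N)^2 * (real k+1)^2)
        \<and> norm (T z - z) \<le> 1/(real m + 1))"
proof (rule disj_by_neg1)
  assume "\<not> (\<forall>w. norm (w - p) \<le> real N \<longrightarrow> norm (T w - w) \<le> 1/(real (24*N*(m+1)^2)) \<longrightarrow> inner (x0 - y) (w - y) \<le> 1/(real k + 1))"
  then obtain w where w: "norm (w - p) \<le> real N" and tw: "norm (T w - w) \<le> 1/(real (24*N*(m+1)^2))"
    and inn: "inner (x0 - y) (w - y) > 1/(real k + 1)" by (auto simp: not_le)
  define Nr where "Nr = real N"
  define \<epsilon> where "\<epsilon> = 1/(real k + 1)"
  define t where "t = \<epsilon> / (4 * Nr^2)"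
  define Mr where "Mr = real m + 1"
  define \<delta> where "\<delta> = 1/(24 * Nr * Mr^2)"
  have Nr1: "1 \<le> Nr" unfolding Nr_def using N1 by simp
  have Mr1: "1 \<le> Mr" unfolding Mr_def by simp
  have eps: "0 < \<epsilon>" "\<epsilon> \<le> 1" unfolding \<epsilon>_def by auto
  have t0: "0 < t" unfolding t_def using eps Nr1 by simp
  have t1: "t \<le> 1"
  proof -
    have "1 \<le> Nr^2" using Nr1 by (rule one_le_power)
    then have "1 \<le> 4 * Nr^2" by linarith
    then have "\<epsilon> / (4 * Nr^2) \<le> \<epsilon> / 1" using eps by (intro divide_left_mono) auto
    then show ?thesis unfolding t_def using eps by simp
  qed
  have tNe: "t * (4 * Nr^2) = \<epsilon>" unfolding t_def using Nr1 by simp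
  define z where "z = (1-t) *\<^sub>R y + t *\<^sub>R w"
  show "\<exists>z. norm (z - p) \<le> real N \<and> (norm (x0 - z))^2 \<le> (norm (x0 - y))^2 - 1/(4 * (real N)^2 * (real k+1)^2)
        \<and> norm (T z - z) \<le> 1/(real m + 1)"
  proof (intro exI conjI)
    have "z - p = (1-t) *\<^sub>R (y - p) + t *\<^sub>R (w - p)" unfolding z_def by (simp add: algebra_simps)
    then have "norm (z - p) \<le> (1-t) * norm (y - p) + t * norm (w - p)"
      using t0 t1 norm_triangle_ineq[of "(1-t) *\<^sub>R (y - p)" "t *\<^sub>R (w - p)"] by simp
    also have "\<dots> \<le> (1-t) * real N + t * real N" using y w t0 t1 by (intro add_mono mult_left_mono) auto
    finally show "norm (z - p) \<le> real N" by (simp add: algebra_simps)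
  next
    have xz: "x0 - z = (x0 - y) - t *\<^sub>R (w - y)" unfolding z_def by (simp add: algebra_simps)
    have e: "(norm (x0 - z))^2 = (norm (x0 - y))^2 - 2*t*inner (x0 - y) (w - y) + t^2 * (norm (w - y))^2"
      unfolding xz power2_norm_eq_inner
      by (simp add: inner_diff_left inner_diff_right inner_commute algebra_simps power2_eq_square)
    have wy: "norm (w - y) \<le> 2 * Nr"
      using norm_triangle_ineq[of "w - p" "p - y"] w y unfolding Nr_def by (simp add: norm_minus_commute)
    have "t^2 * (norm (w - y))^2 \<le> t^2 * (2*Nr)^2" by (intro mult_left_mono power_mono wy) auto
    also have "\<dots> = t * \<epsilon>" using tNe by (simp add: power2_eq_square algebra_simps)
    finally have h1: "t^2 * (norm (w - y))^2 \<le> t * \<epsilon>" .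
    have h2: "2*t*\<epsilon> \<le> 2*t*inner (x0 - y) (w - y)" using inn t0 unfolding \<epsilon>_def
      by (intro mult_left_mono) auto
    have h3: "t * \<epsilon> = 1/(4 * (real N)^2 * (real k+1)^2)"
      unfolding t_def \<epsilon>_def Nr_def by (simp add: power2_eq_square)
    show "(norm (x0 - z))^2 \<le> (norm (x0 - y))^2 - 1/(4 * (real N)^2 * (real k+1)^2)"
      using e h1 h2 h3 by linarith
  next
    have dpos: "0 < \<delta>" unfolding \<delta>_def using Nr1 Mr1 by simp
    have rN: "real (24*N*(m+1)^2) = 24 * Nr * Mr^2" unfolding Nr_def Mr_def by simp
    have tw': "norm (T w - w) \<le> \<delta>" using tw unfolding \<delta>_def rN .
    have Wge: "24*N*(m+1)^2 \<le> w_fun g N m" unfolding w_fun_def by simp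
    have ty': "norm (T y - y) \<le> \<delta>"
    proof -
      have "real (24*N*(m+1)^2) \<le> real (w_fun g N m)" using Wge by linarith
      then have "1/(real (w_fun g N m) + 1) \<le> 1/(real (24*N*(m+1)^2))"
        using rN Nr1 Mr1 by (intro divide_left_mono) auto
      then show ?thesis using ty unfolding \<delta>_def rN by linarith
    qed
    have "(norm (T z - z))^2 \<le> norm (y - w) * \<delta> + \<delta>^2"
      unfolding z_def by (rule combo_bound[OF neT less_imp_le[OF t0] t1 ty' tw'])
    also have "\<dots> \<le> 2 * Nr * \<delta> + Nr * \<delta>"
    proof -
      have "norm (y - w) \<le> 2 * Nr"
        using norm_triangle_ineq[of "w - p" "p - y"] w y unfolding Nr_def by (simp add: norm_minus_commute)
      then have a: "norm (y - w) * \<delta> \<le> 2 * Nr * \<delta>" using dpos by (intro mult_right_mono) auto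
      have d1: "\<delta> \<le> 1"
      proof -
        have m2: "1 \<le> Mr^2" by (rule one_le_power[OF Mr1])
        have "1*1 \<le> Nr * Mr^2" by (rule mult_mono) (use Nr1 m2 in auto)
        moreover have "24 * Nr * Mr^2 = 24 * (Nr * Mr^2)" by simp
        ultimately have "1 \<le> 24 * Nr * Mr^2" by linarith
        then show ?thesis unfolding \<delta>_def by simp
      qed
      have "\<delta>^2 \<le> Nr * \<delta>" using d1 Nr1 dpos unfolding power2_eq_square
        by (intro mult_right_mono) auto
      then show ?thesis using a by linarith
    qed
    also have "\<dots> = 1/(8 * Mr^2)" unfolding \<delta>_def using Nr1 Mr1 by (simp add: field_simps)
    also have "\<dots> \<le> (1/Mr)^2" using Mr1 by (simp add: field_simps power2_eq_square)
    finally have "(norm (T z - z))^2 \<le> (1/Mr)^2" .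
    then have "norm (T z - z) \<le> 1/Mr" by (rule power2_le_imp_le) (use Mr1 in simp)
    then show "norm (T z - z) \<le> 1/(real m + 1)" unfolding Mr_def .
  qed
qed

end



lemma W_ge: "1 \<le> N \<Longrightarrow> m \<le> w_fun g N m" and W_ge2: "24*N*(m+1)^2 \<le> w_fun g N m" and W_ge3: "g (24*N*(m+1)^2) \<le> w_fun g N m"
proof -
  assume N: "1 \<le> N"
  have "m \<le> (m+1)^2" by (simp add: power2_eq_square)
  also have "(m+1)^2 \<le> (24*N)*(m+1)^2" using N by simp
  also have "\<dots> \<le> w_fun g N m" unfolding w_fun_def by simp
  finally show "m \<le> w_fun g N m" .
qed (auto simp: w_fun_def)

context
  fixes T :: "'a::real_inner \<Rightarrow> 'a" and x0 p :: 'a and N DD k :: nat and g :: "nat \<Rightarrow> nat"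
  assumes neT: "\<And>x y. norm (T x - T y) \<le> norm (x - y)" and Tp: "T p = p"
    and DD: "norm (x0 - p) \<le> real DD" and DDN: "DD \<le> N" and N1: "1 \<le> N"
begin

lemma proj_main:
  "\<exists>m \<le> (w_fun g N ^^ (4*N^4*(k+1)^2)) 0. \<exists>y. norm (y - p) \<le> real N \<and> norm (T y - y) \<le> 1/(real (g (24*N*(m+1)^2)) + 1)
     \<and> (\<forall>w. norm (w - p) \<le> real N \<longrightarrow> norm (T w - w) \<le> 1/(real (24*N*(m+1)^2)) \<longrightarrow> inner (x0 - y) (w - y) \<le> 1/(real k + 1))"
  (is "?GOOD")
proof -
  define W where "W = w_fun g N"
  define R where "R = 4*N^4*(k+1)^2"
  define L where "L r = (W^^r) 0" for r
  define c where "c = 1/(4 * (real N)^2 * (real k+1)^2)"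
  note step = proj_step[OF neT Tp DD DDN N1]
  have Lmono: "r \<le> s \<Longrightarrow> L r \<le> L s" for r s
    unfolding L_def by (rule funpow_levels_mono) (use W_ge N1 W_def in auto)
  have LSuc: "L (Suc r) = W (L r)" for r unfolding L_def by simp
  have good_of: "?GOOD" if y: "norm (y - p) \<le> real N" and ty: "norm (T y - y) \<le> 1/(real (W m) + 1)"
    and m: "m \<le> L R"
    and t: "\<forall>w. norm (w - p) \<le> real N \<longrightarrow> norm (T w - w) \<le> 1/(real (24*N*(m+1)^2)) \<longrightarrow> inner (x0 - y) (w - y) \<le> 1/(real k + 1)"
    for m y
  proof -
    have "real (g (24*N*(m+1)^2)) \<le> real (W m)" using W_ge3[of g N m] unfolding W_def by linarith
    then have "1/(real (W m) + 1) \<le> 1/(real (g (24*N*(m+1)^2)) + 1)" by (intro divide_left_mono) auto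
    then have "norm (T y - y) \<le> 1/(real (g (24*N*(m+1)^2)) + 1)" using ty by linarith
    then show ?thesis using y t m unfolding L_def R_def W_def by blast
  qed
  have claim: "j \<le> R \<Longrightarrow> ?GOOD \<or> (\<exists>y. norm (y - p) \<le> real N \<and> (norm (x0 - y))^2 \<le> (real DD)^2 - real j * c
      \<and> norm (T y - y) \<le> 1/(real (W (L (R - j))) + 1))" for j
  proof (induction j)
    case 0
    have "(norm (x0 - p))^2 \<le> (real DD)^2" using DD by (intro power_mono) auto
    moreover have "norm (p - p) \<le> real N" by simp
    ultimately show ?case using Tp by (intro disjI2 exI[of _ p]) simp
  next
    case (Suc j)
    then have "j \<le> R" by simp
    from Suc.IH[OF this] show ?case
    proof
      assume "?GOOD" then show ?thesis by blast
    next
      assume "\<exists>y. norm (y - p) \<le> real N \<and> (norm (x0 - y))^2 \<le> (real DD)^2 - real j * c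
        \<and> norm (T y - y) \<le> 1/(real (W (L (R - j))) + 1)"
      then obtain y where y: "norm (y - p) \<le> real N" and fy: "(norm (x0 - y))^2 \<le> (real DD)^2 - real j * c"
        and ty: "norm (T y - y) \<le> 1/(real (W (L (R - j))) + 1)" by blast
      from step[OF y ty[unfolded W_def]] show ?thesis
      proof
        assume t: "\<forall>w. norm (w - p) \<le> real N \<longrightarrow> norm (T w - w) \<le> 1/(real (24*N*(L (R - j)+1)^2)) \<longrightarrow> inner (x0 - y) (w - y) \<le> 1/(real k + 1)"
        have "L (R - j) \<le> L R" by (rule Lmono) simp
        then show ?thesis using good_of[OF y ty _ t] by blast
      next
        assume "\<exists>z. norm (z - p) \<le> real N \<and> (norm (x0 - z))^2 \<le> (norm (x0 - y))^2 - 1/(4 * (real N)^2 * (real k+1)^2)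
          \<and> norm (T z - z) \<le> 1/(real (L (R - j)) + 1)"
        then obtain z where z: "norm (z - p) \<le> real N" and fz: "(norm (x0 - z))^2 \<le> (norm (x0 - y))^2 - c"
          and tz: "norm (T z - z) \<le> 1/(real (L (R - j)) + 1)" unfolding c_def by blast
        have "R - j = Suc (R - Suc j)" using Suc.prems by simp
        then have "L (R - j) = W (L (R - Suc j))" using LSuc by simp
        moreover have "(norm (x0 - z))^2 \<le> (real DD)^2 - real (Suc j) * c" using fz fy by (simp add: algebra_simps)
        ultimately show ?thesis using z tz by auto
      qed
    qed
  qed
  from claim[of R, OF order_refl] show ?thesis
  proof
    assume "?GOOD" then show ?thesis .
  next
    assume "\<exists>y. norm (y - p) \<le> real N \<and> (norm (x0 - y))^2 \<le> (real DD)^2 - real R * c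
      \<and> norm (T y - y) \<le> 1/(real (W (L (R - R))) + 1)"
    then obtain y where y: "norm (y - p) \<le> real N" and fy: "(norm (x0 - y))^2 \<le> (real DD)^2 - real R * c"
      and ty: "norm (T y - y) \<le> 1/(real (W (L 0)) + 1)" by auto
    from step[OF y ty[unfolded W_def]] show ?thesis
    proof
      assume t: "\<forall>w. norm (w - p) \<le> real N \<longrightarrow> norm (T w - w) \<le> 1/(real (24*N*(L 0+1)^2)) \<longrightarrow> inner (x0 - y) (w - y) \<le> 1/(real k + 1)"
      have "L 0 \<le> L R" by (rule Lmono) simp
      then show ?thesis using good_of[OF y ty _ t] by blast
    next
      assume "\<exists>z. norm (z - p) \<le> real N \<and> (norm (x0 - z))^2 \<le> (norm (x0 - y))^2 - 1/(4 * (real N)^2 * (real k+1)^2)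
          \<and> norm (T z - z) \<le> 1/(real (L 0) + 1)"
      then obtain z where fz: "(norm (x0 - z))^2 \<le> (norm (x0 - y))^2 - c" unfolding c_def by blast
      define X where "X = 4 * (real N)^2 * (real k+1)^2"
      have Xpos: "X > 0" unfolding X_def using N1 by simp
      have RX: "real R = (real N)^2 * X" unfolding R_def X_def
        by (simp add: algebra_simps power2_eq_square power4_eq_xxxx)
      have Rc: "real R * c = (real N)^2"
        unfolding RX c_def X_def[symmetric] using Xpos by simp
      have "(real DD)^2 \<le> (real N)^2" using DDN by (intro power_mono) auto
      moreover have cpos: "0 < c" unfolding c_def using N1 by simp
      ultimately have "(norm (x0 - z))^2 < 0" using fz fy Rc by linarith
      then show ?thesis by simp
    qed
  qed
qed

end



lemma chi1_mono:
  assumes "mono a" "mono B" "mono E" "k \<le> k'"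
  shows "chi1 a B E DD EE k \<le> chi1 a B E DD EE k'"
proof -
  have 1: "a (2 * (2 * DD + EE) * (4*k+3 + 1) - 1) \<le> a (2 * (2 * DD + EE) * (4*k'+3 + 1) - 1)"
    using assms(4) by (intro monoD[OF assms(1)] diff_le_mono mult_le_mono2) auto
  have 2: "E (2 * (4*k+3) + 1) + 1 \<le> E (2 * (4*k'+3) + 1) + 1"
    using assms(4) by (simp add: monoD[OF assms(3)])
  have 3: "B (8 * (DD + EE) * (k + 1) - 1) \<le> B (8 * (DD + EE) * (k' + 1) - 1)"
    using assms(4) by (intro monoD[OF assms(2)] diff_le_mono mult_le_mono2) auto
  show ?thesis unfolding chi1_def xi_fun_def by (intro add_le_mono1 max.mono 1 2 3)
qed

locale hppa = mm A for A :: "'a::{real_inner,complete_space} \<Rightarrow> 'a set" +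
  fixes \<alpha> \<beta> :: "nat \<Rightarrow> real"
    and e x :: "nat \<Rightarrow> 'a"
    and x0 p :: 'a
    and a b B E :: "nat \<Rightarrow> nat"
    and DD EE :: nat
  assumes alpha_range: "\<And>n. 0 < \<alpha> n \<and> \<alpha> n < 1"
    and beta_pos: "\<And>n. 0 < \<beta> n"
    and x_init: "x 0 = x0"
    and HPPA: "\<And>n. x (Suc n) = \<alpha> n *\<^sub>R x0 + (1 - \<alpha> n) *\<^sub>R (resolvent A (\<beta> n) (x n) + e n)"
    and mono_a: "mono a" and mono_b: "mono b" and mono_B: "mono B" and mono_E: "mono E"
    and Q1: "\<And>k n. n \<ge> a k \<Longrightarrow> \<alpha> n \<le> 1 / (real k + 1)"
    and Q3': "\<And>n. \<beta> n \<le> real (b n)"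
    and Q3: "\<And>k n. n \<ge> B k \<Longrightarrow> \<beta> n \<ge> real k"
    and Q4: "\<And>k n. (\<Sum>i = E k + 1..E k + n. norm (e i)) \<le> 1 / (real k + 1)"
    and p_zero: "p \<in> zeros A"
    and EE_bound: "real EE \<ge> 1 + (\<Sum>i = 0..E 0. norm (e i))"
    and DD_bound: "real DD \<ge> norm (x0 - p)"
begin

lemma EE1: "1 \<le> EE"
proof -
  have "0 \<le> (\<Sum>i = 0..E 0. norm (e i))" by (simp add: sum_nonneg)
  then show ?thesis using EE_bound by linarith
qed

lemma sum_e: "(\<Sum>i<n. norm (e i)) \<le> real EE"
proof -
  have sub: "{..<n} \<subseteq> {0..E 0} \<union> {E 0 + 1..E 0 + n}" by auto
  have "(\<Sum>i<n. norm (e i)) \<le> (\<Sum>i\<in>{0..E 0} \<union> {E 0 + 1..E 0 + n}. norm (e i))"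
    by (rule sum_mono2[OF _ sub]) auto
  also have "\<dots> = (\<Sum>i=0..E 0. norm (e i)) + (\<Sum>i=E 0 + 1..E 0 + n. norm (e i))"
    by (rule sum.union_disjoint) auto
  also have "\<dots> \<le> (real EE - 1) + 1" using EE_bound Q4[of 0 n] by simp
  finally show ?thesis by simp
qed

lemma x_bound_aux: "norm (x n - p) \<le> real DD + (\<Sum>i<n. norm (e i))"
proof (induction n)
  case 0 then show ?case using x_init DD_bound by simp
next
  case (Suc n)
  let ?J = "resolvent A (\<beta> n)"
  let ?S = "(\<Sum>i<n. norm (e i))"
  have Jp: "?J p = p" by (rule res_fix[OF beta_pos p_zero])
  have al: "0 < \<alpha> n" "\<alpha> n < 1" using alpha_range by auto
  have eq: "x (Suc n) - p = \<alpha> n *\<^sub>R (x0 - p) + (1 - \<alpha> n) *\<^sub>R ((?J (x n) - ?J p) + e n)"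
    unfolding HPPA Jp by (simp add: algebra_simps)
  have "norm (x (Suc n) - p) \<le> \<alpha> n * norm (x0 - p) + (1 - \<alpha> n) * norm ((?J (x n) - ?J p) + e n)"
    unfolding eq using norm_triangle_ineq[of "\<alpha> n *\<^sub>R (x0 - p)" "(1 - \<alpha> n) *\<^sub>R ((?J (x n) - ?J p) + e n)"] al
    by simp
  also have "\<dots> \<le> \<alpha> n * real DD + (1 - \<alpha> n) * (real DD + ?S + norm (e n))"
  proof (intro add_mono mult_left_mono)
    have "norm ((?J (x n) - ?J p) + e n) \<le> norm (?J (x n) - ?J p) + norm (e n)" by (rule norm_triangle_ineq)
    also have "\<dots> \<le> norm (x n - p) + norm (e n)" using nonexp[OF beta_pos] by simp
    finally show "norm ((?J (x n) - ?J p) + e n) \<le> real DD + ?S + norm (e n)" using Suc.IH by simp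
  qed (use al DD_bound in auto)
  also have "\<dots> \<le> real DD + ?S + norm (e n)"
  proof -
    have "0 \<le> ?S + norm (e n)" by (simp add: sum_nonneg)
    then have "(1 - \<alpha> n) * (?S + norm (e n)) \<le> ?S + norm (e n)" using al
      by (simp add: mult_left_le_one_le)
    then show ?thesis by (simp add: algebra_simps)
  qed
  finally show ?case by simp
qed

lemma x_bound: "norm (x n - p) \<le> real DD + real EE"
  using x_bound_aux[of n] sum_e[of n] by linarith

lemma chi1_approx:
  assumes i: "i \<ge> chi1 a B E DD EE k'"
  shows "norm (resolvent A 1 (x i) - x i) \<le> 1/(real k' + 1)"
proof -
  obtain j where ij: "i = Suc j" and j1: "j \<ge> xi_fun a E DD EE (4*k'+3)" and j2: "j \<ge> B (8*(DD+EE)*(k'+1) - 1)"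
    using i unfolding chi1_def by (cases i) auto
  define K1 where "K1 = real k' + 1"
  define M where "M = real DD + real EE"
  have K1: "1 \<le> K1" unfolding K1_def by simp
  have M1: "1 \<le> M" unfolding M_def using EE1 by simp
  have ja: "j \<ge> a (2 * (2 * DD + EE) * (4*k'+3 + 1) - 1)" using j1 unfolding xi_fun_def by simp
  have jE: "j \<ge> E (2 * (4*k'+3) + 1) + 1" using j1 unfolding xi_fun_def by simp
  have al: "\<alpha> j \<le> 1 / (2 * (2 * real DD + real EE) * (4*K1))"
  proof -
    have pos: "1 \<le> 2 * (2 * DD + EE) * (4*k'+3 + 1)" using EE1 by simp
    have "\<alpha> j \<le> 1 / (real (2 * (2 * DD + EE) * (4*k'+3 + 1) - 1) + 1)" by (rule Q1[OF ja])
    also have "real (2 * (2 * DD + EE) * (4*k'+3 + 1) - 1) + 1 = 2 * (2 * real DD + real EE) * (4*K1)"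
      using pos unfolding K1_def by (simp add: of_nat_diff algebra_simps)
    finally show ?thesis .
  qed
  have alr: "0 < \<alpha> j" "\<alpha> j < 1" using alpha_range by auto
  have en: "norm (e j) \<le> 1 / (8*K1)"
  proof -
    define K where "K = 2 * (4*k'+3) + 1"
    have "norm (e j) \<le> (\<Sum>i = E K + 1..E K + (j - E K). norm (e i))"
      using jE unfolding K_def by (intro member_le_sum) auto
    also have "\<dots> \<le> 1 / (real K + 1)" by (rule Q4)
    also have "real K + 1 = 8 * K1" unfolding K_def K1_def by simp
    finally show ?thesis .
  qed
  have be: "\<beta> j \<ge> 8 * M * K1 - 1"
  proof -
    have pos: "1 \<le> 8*(DD+EE)*(k'+1)" using EE1 by simp
    have "\<beta> j \<ge> real (8*(DD+EE)*(k'+1) - 1)" by (rule Q3[OF j2])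
    also have "real (8*(DD+EE)*(k'+1) - 1) = 8 * M * K1 - 1"
      using pos unfolding M_def K1_def by (simp add: of_nat_diff algebra_simps)
    finally show ?thesis .
  qed
  have bpos: "0 < \<beta> j" by (rule beta_pos)
  define u where "u = resolvent A (\<beta> j) (x j)"
  have up: "norm (u - p) \<le> norm (x j - p)"
    using nonexp[OF bpos, of "x j" p] res_fix[OF bpos p_zero] unfolding u_def by simp
  have xj: "norm (x j - p) \<le> M" using x_bound unfolding M_def .
  have x0u: "norm (x0 - u) \<le> 2 * real DD + real EE"
  proof -
    have "norm (x0 - u) \<le> norm (x0 - p) + norm (u - p)"
      using norm_triangle_ineq[of "x0 - p" "p - u"] by (simp add: norm_minus_commute)
    then show ?thesis using DD_bound up xj unfolding M_def by linarith
  qed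
  have xiu: "norm (x i - u) \<le> 1 / (4*K1)"
  proof -
    have eq: "x i - u = \<alpha> j *\<^sub>R (x0 - u) + (1 - \<alpha> j) *\<^sub>R e j"
      unfolding ij HPPA u_def by (simp add: algebra_simps)
    have "norm (x i - u) \<le> \<alpha> j * norm (x0 - u) + (1 - \<alpha> j) * norm (e j)"
      unfolding eq using norm_triangle_ineq[of "\<alpha> j *\<^sub>R (x0 - u)" "(1 - \<alpha> j) *\<^sub>R e j"] alr by simp
    also have "\<dots> \<le> \<alpha> j * (2 * real DD + real EE) + 1 * norm (e j)"
      using alr x0u by (intro add_mono mult_left_mono mult_right_mono) auto
    also have "\<alpha> j * (2 * real DD + real EE) \<le> 1 / (8*K1)"
    proof -
      define P where "P = 2 * real DD + real EE"
      have pp: "0 < P" unfolding P_def using EE1 by simp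
      have "\<alpha> j * P \<le> 1 / (2 * P * (4*K1)) * P"
        using al pp unfolding P_def by (intro mult_right_mono) auto
      also have "\<dots> = 1 / (8*K1)" using pp K1 by (simp add: field_simps)
      finally show ?thesis unfolding P_def .
    qed
    finally show ?thesis using en K1 by (simp add: field_simps)
  qed
  have MK: "1 \<le> M * K1"
  proof -
    have "1*1 \<le> M * K1" by (rule mult_mono) (use M1 K1 in auto)
    then show ?thesis by simp
  qed
  have MK8: "8 * M * K1 = 8 * (M * K1)" "4 * M * K1 = 4 * (M * K1)" by simp_all
  have tu: "norm (resolvent A 1 u - u) \<le> 1 / (2*K1)"
  proof -
    have "norm (resolvent A 1 u - u) \<le> norm (x j - u) / \<beta> j" unfolding u_def by (rule res_range[OF bpos])
    also have "norm (x j - u) \<le> 2 * M"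
      using norm_triangle_ineq[of "x j - p" "p - u"] xj up by (simp add: norm_minus_commute)
    then have "norm (x j - u) / \<beta> j \<le> 2 * M / (8 * M * K1 - 1)"
    proof -
      assume h: "norm (x j - u) \<le> 2 * M"
      have "8 * M * K1 - 1 > 0" using MK MK8 by linarith
      then have "norm (x j - u) / \<beta> j \<le> 2 * M / \<beta> j" using h bpos by (simp add: divide_right_mono)
      also have "\<dots> \<le> 2 * M / (8 * M * K1 - 1)"
        using be M1 \<open>8 * M * K1 - 1 > 0\<close> by (intro divide_left_mono) auto
      finally show ?thesis .
    qed
    also have "2 * M / (8 * M * K1 - 1) \<le> 2 * M / (4 * M * K1)"
    proof (rule divide_left_mono)
      show "4 * M * K1 \<le> 8 * M * K1 - 1" using MK MK8 by linarith
      show "0 \<le> 2 * M" using M1 by simp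
      show "0 < (8 * M * K1 - 1) * (4 * M * K1)" using MK MK8 M1 K1 by (intro mult_pos_pos) linarith+
    qed
    also have "\<dots> = 1 / (2*K1)" using M1 K1 by (simp add: field_simps)
    finally show ?thesis .
  qed
  have "norm (resolvent A 1 (x i) - x i) \<le> norm (resolvent A 1 (x i) - resolvent A 1 u) + norm (resolvent A 1 u - u) + norm (u - x i)"
    using norm_triangle_ineq[of "resolvent A 1 (x i) - resolvent A 1 u" "resolvent A 1 u - u"]
      norm_triangle_ineq[of "resolvent A 1 (x i) - u" "u - x i"] by simp
  also have "\<dots> \<le> norm (x i - u) + 1 / (2*K1) + norm (x i - u)"
    using nonexp[of 1 "x i" u] tu by (simp add: norm_minus_commute)
  also have "\<dots> \<le> 1 / (4*K1) + 1 / (2*K1) + 1 / (4*K1)" using xiu by simp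
  also have "\<dots> = 1 / K1" using K1 by (simp add: field_simps)
  finally show ?thesis unfolding K1_def .
qed

end



context hppa begin

lemma main_result:
  "\<forall>k. \<forall>f::nat \<Rightarrow> nat. mono f \<longrightarrow>
           (\<exists>n \<le> Psi a b B E DD EE k f. \<exists>y. norm (y - p) \<le> real (N_bound DD EE) \<and>
              (\<forall>i \<in> {n..f n}. norm (resolvent A (\<beta> i) y - y) \<le> 1 / (real (f n) + 1)
                 \<and> inner (x0 - y) (x i - y) \<le> 1 / (real k + 1)))"
proof (intro allI impI)
  fix k and f :: "nat \<Rightarrow> nat" assume mf: "mono f"
  define N where "N = N_bound DD EE"
  define g where "g = nu_hat a b B E DD EE f"
  define T where "T = resolvent A 1"
  define L where "L = (w_fun g N ^^ (4*N^4*(k+1)^2)) 0"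
  have DDN: "DD \<le> N" unfolding N_def N_bound_def by simp
  have N1: "1 \<le> N" using EE1 unfolding N_def N_bound_def by simp
  have NE: "real DD + real EE \<le> real N" unfolding N_def N_bound_def by simp
  have neT: "norm (T u - T v) \<le> norm (u - v)" for u v unfolding T_def by (rule nonexp) simp
  have Tp: "T p = p" unfolding T_def by (rule res_fix[OF _ p_zero]) simp
  from proj_main[OF neT Tp DD_bound DDN N1, of k g]
  obtain m y where m: "m \<le> L" and y: "norm (y - p) \<le> real N"
    and ty: "norm (T y - y) \<le> 1/(real (g (24*N*(m+1)^2)) + 1)"
    and yt: "\<And>w. norm (w - p) \<le> real N \<Longrightarrow> norm (T w - w) \<le> 1/(real (24*N*(m+1)^2)) \<Longrightarrow> inner (x0 - y) (w - y) \<le> 1/(real k + 1)"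
    unfolding L_def by blast
  define n where "n = chi1 a B E DD EE (24*N*(m+1)^2)"
  have nPsi: "n \<le> Psi a b B E DD EE k f"
  proof -
    have "Psi a b B E DD EE k f = chi1 a B E DD EE (24*N*(L+1)^2)"
      unfolding Psi_def Let_def L_def N_def g_def by simp
    moreover have "24*N*(m+1)^2 \<le> 24*N*(L+1)^2" using m by (intro mult_le_mono2 power_mono) auto
    ultimately show ?thesis unfolding n_def using chi1_mono[OF mono_a mono_B mono_E] by simp
  qed
  define Bm where "Bm = max 2 (b (f n))"
  have Bm2: "2 \<le> Bm" unfolding Bm_def by simp
  have gval: "real (g (24*N*(m+1)^2)) + 1 = real Bm * (real (f n) + 1)"
  proof -
    have "g (24*N*(m+1)^2) = Bm * (f n + 1) - 1"
      unfolding g_def nu_hat_def nu_f_def delta_b_def n_def Bm_def by simp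
    moreover have "1 \<le> Bm * (f n + 1)" using Bm2 by simp
    ultimately show ?thesis by (simp add: of_nat_diff algebra_simps)
  qed
  show "\<exists>n \<le> Psi a b B E DD EE k f. \<exists>y. norm (y - p) \<le> real (N_bound DD EE) \<and>
              (\<forall>i \<in> {n..f n}. norm (resolvent A (\<beta> i) y - y) \<le> 1 / (real (f n) + 1)
                 \<and> inner (x0 - y) (x i - y) \<le> 1 / (real k + 1))"
  proof (intro exI conjI ballI)
    show "n \<le> Psi a b B E DD EE k f" by (rule nPsi)
    show "norm (y - p) \<le> real (N_bound DD EE)" using y unfolding N_def .
  next
    fix i assume i: "i \<in> {n..f n}"
    have "max 2 (\<beta> i) \<le> real Bm"
    proof -
      have "\<beta> i \<le> real (b i)" by (rule Q3')
      also have "real (b i) \<le> real (b (f n))" using i monoD[OF mono_b, of i "f n"] by simp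
      also have "\<dots> \<le> real Bm" unfolding Bm_def by simp
      finally show ?thesis using Bm2 by simp
    qed
    have "norm (resolvent A (\<beta> i) y - y) \<le> max 2 (\<beta> i) * norm (T y - y)"
      unfolding T_def by (rule res_scale[OF beta_pos])
    also have "\<dots> \<le> real Bm * (1/(real Bm * (real (f n) + 1)))"
      using ty gval \<open>max 2 (\<beta> i) \<le> real Bm\<close> by (intro mult_mono) auto
    also have "\<dots> = 1 / (real (f n) + 1)" using Bm2 by simp
    finally show "norm (resolvent A (\<beta> i) y - y) \<le> 1 / (real (f n) + 1)" .
    have xb: "norm (x i - p) \<le> real N" using x_bound[of i] NE by linarith
    have "norm (T (x i) - x i) \<le> 1 / (real (24*N*(m+1)^2) + 1)"
      unfolding T_def using chi1_approx[of "24*N*(m+1)^2" i] i unfolding n_def by simp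
    also have "\<dots> \<le> 1 / real (24*N*(m+1)^2)"
    proof -
      have pos: "0 < real (24*N*(m+1)^2)" using N1 by simp
      have gen: "1/(r+1) \<le> 1/r" if "0 < r" for r :: real
        by (rule divide_left_mono) (use that in \<open>auto simp: zero_less_mult_iff\<close>)
      show ?thesis by (rule gen[OF pos])
    qed
    finally show "inner (x0 - y) (x i - y) \<le> 1 / (real k + 1)" using yt[OF xb] by simp
  qed
qed

end

theorem mainTheorem12:
  fixes A :: "'a::{real_inner, complete_space} \<Rightarrow> 'a set"
    and \<alpha> \<beta> :: "nat \<Rightarrow> real"
    and e x :: "nat \<Rightarrow> 'a"
    and x0 p :: 'a
    and a b B E :: "nat \<Rightarrow> nat"
    and DD EE :: nat
  assumes maxmon: "maximal_monotone A"
    and alpha_range: "\<And>n. 0 < \<alpha> n \<and> \<alpha> n < 1"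
    and beta_pos: "\<And>n. 0 < \<beta> n"
    and x_init: "x 0 = x0"
    and HPPA: "\<And>n. x (Suc n) = \<alpha> n *\<^sub>R x0 + (1 - \<alpha> n) *\<^sub>R (resolvent A (\<beta> n) (x n) + e n)"
    and mono_a: "mono a" and mono_b: "mono b" and mono_B: "mono B" and mono_E: "mono E"
    and Q1: "\<And>k n. n \<ge> a k \<Longrightarrow> \<alpha> n \<le> 1 / (real k + 1)"
    and Q3': "\<And>n. \<beta> n \<le> real (b n)"
    and Q3: "\<And>k n. n \<ge> B k \<Longrightarrow> \<beta> n \<ge> real k"
    and Q4: "\<And>k n. (\<Sum>i = E k + 1..E k + n. norm (e i)) \<le> 1 / (real k + 1)"
    and p_zero: "p \<in> zeros A"
    and EE_bound: "real EE \<ge> 1 + (\<Sum>i = 0..E 0. norm (e i))"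
    and DD_bound: "real DD \<ge> norm (x0 - p)"
  shows "\<forall>k. \<forall>f::nat \<Rightarrow> nat. mono f \<longrightarrow>
           (\<exists>n \<le> Psi a b B E DD EE k f. \<exists>y. norm (y - p) \<le> real (N_bound DD EE) \<and>
              (\<forall>i \<in> {n..f n}. norm (resolvent A (\<beta> i) y - y) \<le> 1 / (real (f n) + 1)
                 \<and> inner (x0 - y) (x i - y) \<le> 1 / (real k + 1)))"
  proof -
  have mmI: "mm A" by unfold_locales (use maxmon p_zero in auto)
  interpret hppa A \<alpha> \<beta> e x x0 p a b B E DD EE
    by (intro hppa.intro mmI hppa_axioms.intro) (use assms in blast)+
  show ?thesis by (rule main_result)
qed

end
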